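(* Let $\varphi(\bm x,\bm y,\bm z)=\bigwedge_{i=1}^n \bm r_i^\top\bm x<\bm s_i^\top\bm y+\bm t_i^\top\bm z+h_i\wedge\bigwedge_{j=1}^m\bm u_j^\top\bm x=\bm v_j^\top\bm y+\bm w_j^\top\bm z+d_j$ as in the context, and let $\bm c\in\mathbb{R}^e$. Then $\exists^{\mathsf{ram}}\bm x,\bm y\colon\varphi(\bm x,\bm y,\bm c)$ holds over $\mathbb{R}$ if and only if there exists a $\bm c$-admissible profile $\bm p$ and a sequence compatible with $\bm p$ that satisfies the equality constraints for $\bm c$.
   Context: Here $\bm x,\bm y$ range over $\mathbb{R}^d$ and $\bm z$ over $\mathbb{R}^e$; $\bm r_i,\bm s_i,\bm u_j,\bm v_j\in\mathbb{Q}^d$, $\bm t_i,\bm w_j\in\mathbb{Q}^e$, $h_i,d_j\in\mathbb{Q}$. A profile is a tuple $\bm p=(\rho,\sigma,t_\rho,t_\sigma)$ of functions $\rho,\sigma\colon\{1,\dots,n\}\to\mathbb{R}\cup\{-\omega,\omega\}$ and $t_\rho,t_\sigma\colon\{1,\dots,n\}\to\{-\omega,-1,0,1,\omega\}$. For a sequence $(\bm a_k)_{k\ge1}$ in $\mathbb{R}^d$ let $\bm\rho_i=(\bm r_i^\top\bm a_k)_{k\ge1}$ and $\bm\sigma_i=(\bm s_i^\top\bm a_k)_{k\ge1}$. A sequence of pairwise distinct vectors is compatible with $\bm p$ if for every $i$ the following hold for $\bm\rho_i$ with respect to $(\rho(i),t_\rho(i))$, and likewise for $\bm\sigma_i$ with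 respect to $(\sigma(i),t_\sigma(i))$: type $0$ means the sequence is constantly equal to the value; type $1$ (resp. $-1$) means it is strictly increasing (resp. strictly decreasing) and converges from below (resp. above) to the real value; type $\omega$ (resp. $-\omega$) means it is strictly increasing and diverges to $\infty$ (resp. strictly decreasing and diverges to $-\infty$) and the value is $\omega$ (resp. $-\omega$). A profile is $\bm c$-admissible if for all $i$: (a) $\sigma(i)\neq-\omega$, and if $\rho(i)=\omega$ then $\sigma(i)=\omega$; (b) $\rho(i)<\sigma(i)+\bm t_i^\top\bm c+h_i$ whenever ($t_\rho(i)\in\{-1,0\}$ and $t_\sigma(i)\in\{0,1\}$) or ($t_\rho(i)=t_\sigma(i)=-1$); (c) $\rho(i)\le\sigma(i)+\bm t_i^\top\bm c+h_i$ whenever ($t_\rho(i)=0$ and $t_\sigma(i)=-1$) or $t_\rho(i)=1$. A sequence $(\bm a_k)$ satisfies the equality constraints for $\bm c$ if $\bm u_j^\top\bm a_k=\bm v_j^\top\bm a_\ell+\bm w_j^\top\bm c+d_j$ for all $j$ and all $k<\ell$. Ramsey quantifier: $\exists^{\mathsf{ram}}\bm x,\bm y\colon\varphi(\bm x,\bm y,\bm c)$ holds iff there is an infinite sequence of pairwise distinct $\bm a_i\in\mathbb{R}^d$ with $\varphi(\bm a_i,\bm a_j,\bm c)$ for all $i<j$. *)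

theory Defs
  imports "HOL-Analysis.Analysis" "HOL-Library.Extended_Real"
begin

datatype ptype = NegOmega | NegOne | Zero | One | Omega

definition seq_compatible :: "(nat \<Rightarrow> real) \<Rightarrow> ereal \<Rightarrow> ptype \<Rightarrow> bool" where
  "seq_compatible f v t =
    (case t of
       Zero \<Rightarrow> (\<forall>k. ereal (f k) = v)
     | One \<Rightarrow> (\<exists>a. v = ereal a \<and> (\<forall>k l. k < l \<longrightarrow> f k < f l) \<and> f \<longlonglongrightarrow> a)
     | NegOne \<Rightarrow> (\<exists>a. v = ereal a \<and> (\<forall>k l. k < l \<longrightarrow> f l < f k) \<and> f \<longlonglongrightarrow> a)
     | Omega \<Rightarrow> (v = \<infinity> \<and> (\<forall>k l. k < l \<longrightarrow> f k < f l) \<and> filterlim f at_top sequentially)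
     | NegOmega \<Rightarrow> (v = -\<infinity> \<and> (\<forall>k l. k < l \<longrightarrow> f l < f k) \<and> filterlim f at_bot sequentially))"

definition compatible ::
  "nat \<Rightarrow> (nat \<Rightarrow> real^'d) \<Rightarrow> (nat \<Rightarrow> real^'d)
   \<Rightarrow> (nat \<Rightarrow> ereal) \<Rightarrow> (nat \<Rightarrow> ereal) \<Rightarrow> (nat \<Rightarrow> ptype) \<Rightarrow> (nat \<Rightarrow> ptype)
   \<Rightarrow> (nat \<Rightarrow> real^'d) \<Rightarrow> bool" where
  "compatible n r s \<rho> \<sigma> t\<rho> t\<sigma> a =
    (inj a \<and> (\<forall>i\<in>{1..n}.
        seq_compatible (\<lambda>k. r i \<bullet> a k) (\<rho> i) (t\<rho> i) \<and>
        seq_compatible (\<lambda>k. s i \<bullet> a k) (\<sigma> i) (t\<sigma> i)))"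

definition admissible ::
  "nat \<Rightarrow> (nat \<Rightarrow> real^'e) \<Rightarrow> (nat \<Rightarrow> real) \<Rightarrow> real^'e
   \<Rightarrow> (nat \<Rightarrow> ereal) \<Rightarrow> (nat \<Rightarrow> ereal) \<Rightarrow> (nat \<Rightarrow> ptype) \<Rightarrow> (nat \<Rightarrow> ptype) \<Rightarrow> bool" where
  "admissible n t h c \<rho> \<sigma> t\<rho> t\<sigma> =
    (\<forall>i\<in>{1..n}.
       (\<sigma> i \<noteq> -\<infinity> \<and> (\<rho> i = \<infinity> \<longrightarrow> \<sigma> i = \<infinity>)) \<and>
       (((t\<rho> i \<in> {NegOne, Zero} \<and> t\<sigma> i \<in> {Zero, One}) \<or> (t\<rho> i = NegOne \<and> t\<sigma> i = NegOne))
          \<longrightarrow> \<rho> i < \<sigma> i + ereal (t i \<bullet> c + h i)) \<and>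
       (((t\<rho> i = Zero \<and> t\<sigma> i = NegOne) \<or> t\<rho> i = One)
          \<longrightarrow> \<rho> i \<le> \<sigma> i + ereal (t i \<bullet> c + h i)))"

definition eq_constraints ::
  "nat \<Rightarrow> (nat \<Rightarrow> real^'d) \<Rightarrow> (nat \<Rightarrow> real^'d) \<Rightarrow> (nat \<Rightarrow> real^'e) \<Rightarrow> (nat \<Rightarrow> real)
   \<Rightarrow> real^'e \<Rightarrow> (nat \<Rightarrow> real^'d) \<Rightarrow> bool" where
  "eq_constraints m u v w d c a =
    (\<forall>j\<in>{1..m}. \<forall>k l. k < l \<longrightarrow> u j \<bullet> a k = v j \<bullet> a l + w j \<bullet> c + d j)"

definition phi ::
  "nat \<Rightarrow> (nat \<Rightarrow> real^'d) \<Rightarrow> (nat \<Rightarrow> real^'d) \<Rightarrow> (nat \<Rightarrow> real^'e) \<Rightarrow> (nat \<Rightarrow> real)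
   \<Rightarrow> nat \<Rightarrow> (nat \<Rightarrow> real^'d) \<Rightarrow> (nat \<Rightarrow> real^'d) \<Rightarrow> (nat \<Rightarrow> real^'e) \<Rightarrow> (nat \<Rightarrow> real)
   \<Rightarrow> real^'d \<Rightarrow> real^'d \<Rightarrow> real^'e \<Rightarrow> bool" where
  "phi n r s t h m u v w d x y z =
    ((\<forall>i\<in>{1..n}. r i \<bullet> x < s i \<bullet> y + t i \<bullet> z + h i) \<and>
     (\<forall>j\<in>{1..m}. u j \<bullet> x = v j \<bullet> y + w j \<bullet> z + d j))"

definition ramsey_exists :: "(real^'d \<Rightarrow> real^'d \<Rightarrow> bool) \<Rightarrow> bool" where
  "ramsey_exists P = (\<exists>a :: nat \<Rightarrow> real^'d. inj a \<and> (\<forall>i j. i < j \<longrightarrow> P (a i) (a j)))"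

end

theory Submission
  imports Defs
begin


lemma sc_tendsto:
  assumes "seq_compatible f v t"
  shows "((\<lambda>k. ereal (f k)) \<longlongrightarrow> v) sequentially"
proof (cases t)
  case NegOmega then show ?thesis using assms
    by (auto simp: seq_compatible_def tendsto_MInfty filterlim_at_bot_dense)
next
  case NegOne then show ?thesis using assms by (auto simp: seq_compatible_def)
next
  case Zero
  then have "(\<lambda>k. ereal (f k)) = (\<lambda>k. v)" using assms by (auto simp: seq_compatible_def)
  then show ?thesis by simp
next
  case One then show ?thesis using assms by (auto simp: seq_compatible_def)
next
  case Omega then show ?thesis using assms
    by (auto simp: seq_compatible_def tendsto_PInfty_eq_at_top)
qed

lemma sc_tendsto_H:
  assumes "seq_compatible f v t"
  shows "((\<lambda>k. ereal (f k + H)) \<longlongrightarrow> v + ereal H) sequentially"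
proof -
  have "((\<lambda>k. ereal (f k) + ereal H) \<longlongrightarrow> v + ereal H) sequentially"
    by (rule tendsto_add_ereal_general) (auto intro: sc_tendsto[OF assms])
  then show ?thesis by simp
qed

lemma sc_mono:
  assumes "seq_compatible f v t" "strict_mono \<psi>"
  shows "seq_compatible (\<lambda>k. f (\<psi> k)) v t"
proof -
  have sm: "k < l \<Longrightarrow> \<psi> k < \<psi> l" for k l using assms(2) by (simp add: strict_mono_less)
  have lim: "X \<longlonglongrightarrow> a \<Longrightarrow> (\<lambda>k. X (\<psi> k)) \<longlonglongrightarrow> a" for X and a :: real
    using LIMSEQ_subseq_LIMSEQ[OF _ assms(2)] by (simp add: o_def)
  have ft: "filterlim X F sequentially \<Longrightarrow> filterlim (\<lambda>k. X (\<psi> k)) F sequentially" for X :: "nat \<Rightarrow> real" and F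
    using filterlim_compose[OF _ filterlim_subseq[OF assms(2)]] by blast
  show ?thesis using assms(1) sm lim ft
    by (cases t) (auto simp: seq_compatible_def)
qed

lemma sc_One: "seq_compatible f v One \<Longrightarrow> ereal (f k) < v"
proof -
  assume a: "seq_compatible f v One"
  then obtain b where b: "v = ereal b" "\<forall>k l. k < l \<longrightarrow> f k < f l" "f \<longlonglongrightarrow> b"
    by (auto simp: seq_compatible_def)
  have "incseq f" using b(2) by (auto simp: incseq_def le_less)
  then have "f (Suc k) \<le> b" using incseq_le b(3) by blast
  moreover have "f k < f (Suc k)" using b(2) by simp
  ultimately show ?thesis using b(1) by simp
qed

lemma sc_NegOne: "seq_compatible f v NegOne \<Longrightarrow> v < ereal (f k)"
proof -
  assume a: "seq_compatible f v NegOne"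
  then obtain b where b: "v = ereal b" "\<forall>k l. k < l \<longrightarrow> f l < f k" "f \<longlonglongrightarrow> b"
    by (auto simp: seq_compatible_def)
  have "decseq f" using b(2) by (intro decseq_SucI) (simp add: less_imp_le)
  then have "b \<le> f (Suc k)" using decseq_ge b(3) by blast
  moreover have "f (Suc k) < f k" using b(2) by simp
  ultimately show ?thesis using b(1) by simp
qed

lemma sc_Zero: "seq_compatible f v Zero \<Longrightarrow> ereal (f k) = v"
  by (simp add: seq_compatible_def)

lemma sc_fin: "seq_compatible f v t \<Longrightarrow> t \<in> {Zero, One, NegOne} \<Longrightarrow> \<exists>b. v = ereal b"
  by (cases t) (auto simp: seq_compatible_def)

lemma sc_Omega: "seq_compatible f v Omega \<Longrightarrow> v = \<infinity>"
  by (simp add: seq_compatible_def)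
lemma sc_NegOmega: "seq_compatible f v NegOmega \<Longrightarrow> v = -\<infinity>"
  by (simp add: seq_compatible_def)



lemma ext_inc:
  fixes x :: "nat \<Rightarrow> real"
  assumes inc: "incseq x"
  shows "\<exists>\<psi> v t. strict_mono \<psi> \<and> seq_compatible (\<lambda>k. x (\<psi> k)) v t"
proof (cases "\<exists>N. \<forall>n\<ge>N. x n = x N")
  case True
  then obtain N where N: "\<forall>n\<ge>N. x n = x N" by blast
  have "strict_mono (\<lambda>k. N + k)" by (simp add: strict_mono_def)
  have e: "\<And>k. x (N+k) = x N" using N le_add1 by blast
  moreover have "seq_compatible (\<lambda>k. x (N + k)) (ereal (x N)) Zero"
    by (simp add: seq_compatible_def e)
  ultimately show ?thesis using \<open>strict_mono (\<lambda>k. N + k)\<close> by blast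
next
  case False
  have "\<forall>N. \<exists>n. N < n \<and> x N < x n"
  proof
    fix N
    obtain n where "n \<ge> N" "x n \<noteq> x N" using False by blast
    moreover have "x N \<le> x n" using inc \<open>n \<ge> N\<close> by (simp add: incseq_def)
    ultimately show "\<exists>n. N < n \<and> x N < x n" by (intro exI[of _ n]) (auto simp: le_less)
  qed
  then obtain g where g0: "\<forall>N. N < g N \<and> x N < x (g N)" by (rule choice[THEN exE])
  then have g: "\<And>N. N < g N \<and> x N < x (g N)" by blast
  define \<phi> where "\<phi> k = (g ^^ k) 0" for k
  have phiS: "\<phi> (Suc k) = g (\<phi> k)" for k by (simp add: \<phi>_def)
  have sm: "strict_mono \<phi>" unfolding strict_mono_Suc_iff using g phiS by simp
  define y where "y k = x (\<phi> k)" for k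
  have smy: "strict_mono y" unfolding strict_mono_Suc_iff y_def using g phiS by simp
  then have ylt: "\<forall>k l. k < l \<longrightarrow> y k < y l" by (simp add: strict_mono_less)
  have incy: "incseq (\<lambda>k. ereal (y k))" using ylt by (intro incseq_SucI) (simp add: less_imp_le)
  have L: "(\<lambda>k. ereal (y k)) \<longlonglongrightarrow> (SUP k. ereal (y k))" by (rule LIMSEQ_SUP[OF incy])
  have ge: "ereal (y 0) \<le> (SUP k. ereal (y k))" by (rule SUP_upper) simp
  show ?thesis
  proof (cases "(SUP k. ereal (y k))")
    case (real a)
    then have "seq_compatible y (ereal a) One" using L ylt by (auto simp: seq_compatible_def)
    then show ?thesis using sm unfolding y_def by blast
  next
    case PInf
    then have "seq_compatible y \<infinity> Omega" using L ylt by (auto simp: seq_compatible_def tendsto_PInfty_eq_at_top)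
    then show ?thesis using sm unfolding y_def by blast
  next
    case MInf then show ?thesis using ge by simp
  qed
qed

lemma sc_uminus:
  assumes "seq_compatible (\<lambda>k. - f k) v t"
  shows "\<exists>v' t'. seq_compatible f v' t'"
proof (cases t)
  case Zero
  then have "\<forall>k. ereal (- f k) = v" using assms by (simp add: seq_compatible_def)
  then have "\<forall>k. ereal (f k) = - v" by (metis ereal_uminus_uminus uminus_ereal.simps(1))
  then have "seq_compatible f (- v) Zero" by (simp add: seq_compatible_def)
  then show ?thesis by blast
next
  case One
  then obtain a where "(\<forall>k l. k < l \<longrightarrow> - f k < - f l)" "(\<lambda>k. - f k) \<longlonglongrightarrow> a"
    using assms by (auto simp: seq_compatible_def)
  then have "seq_compatible f (ereal (-a)) NegOne"
    using tendsto_minus[of "\<lambda>k. - f k" a sequentially] by (simp add: seq_compatible_def)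
  then show ?thesis by blast
next
  case NegOne
  then obtain a where "(\<forall>k l. k < l \<longrightarrow> - f l < - f k)" "(\<lambda>k. - f k) \<longlonglongrightarrow> a"
    using assms by (auto simp: seq_compatible_def)
  then have "seq_compatible f (ereal (-a)) One"
    using tendsto_minus[of "\<lambda>k. - f k" a sequentially] by (simp add: seq_compatible_def)
  then show ?thesis by blast
next
  case Omega
  then have "seq_compatible f (-\<infinity>) NegOmega"
    using assms by (auto simp: seq_compatible_def filterlim_uminus_at_top)
  then show ?thesis by blast
next
  case NegOmega
  then have "seq_compatible f \<infinity> Omega"
    using assms by (auto simp: seq_compatible_def filterlim_uminus_at_bot)
  then show ?thesis by blast
qed

lemma ext1:
  fixes x :: "nat \<Rightarrow> real"
  shows "\<exists>\<psi> v t. strict_mono \<psi> \<and> seq_compatible (\<lambda>k. x (\<psi> k)) v t"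
proof -
  obtain g where g: "strict_mono g" "monoseq (\<lambda>n. x (g n))" using seq_monosub by blast
  show ?thesis
  proof (cases "incseq (\<lambda>n. x (g n))")
    case True
    then obtain \<psi> v t where "strict_mono \<psi>" "seq_compatible (\<lambda>k. x (g (\<psi> k))) v t"
      using ext_inc[OF True] by blast
    moreover have "strict_mono (g \<circ> \<psi>)" using g(1) \<open>strict_mono \<psi>\<close> by (simp add: strict_mono_def)
    ultimately show ?thesis by (intro exI[of _ "g \<circ> \<psi>"]) auto
  next
    case False
    then have "decseq (\<lambda>n. x (g n))" using g(2) monoseq_iff by blast
    then have "incseq (\<lambda>n. - x (g n))" by (simp add: decseq_def incseq_def monotone_on_def)
    then obtain \<psi> v t where "strict_mono \<psi>" "seq_compatible (\<lambda>k. - x (g (\<psi> k))) v t"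
      using ext_inc by blast
    then obtain v' t' where "seq_compatible (\<lambda>k. x (g (\<psi> k))) v' t'" using sc_uminus[of "\<lambda>k. x (g (\<psi> k))"] by blast
    moreover have "strict_mono (g \<circ> \<psi>)" using g(1) \<open>strict_mono \<psi>\<close> by (simp add: strict_mono_def)
    ultimately show ?thesis by (intro exI[of _ "g \<circ> \<psi>"]) auto
  qed
qed

lemma ext_all:
  fixes F G :: "nat \<Rightarrow> nat \<Rightarrow> real"
  shows "\<exists>\<phi>. strict_mono \<phi> \<and> (\<forall>i\<in>{1..N}. (\<exists>v t. seq_compatible (\<lambda>k. F i (\<phi> k)) v t)
           \<and> (\<exists>v t. seq_compatible (\<lambda>k. G i (\<phi> k)) v t))"
proof (induction N)
  case 0
  have "strict_mono (\<lambda>k::nat. k)" by (simp add: strict_mono_def)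
  then show ?case by auto
next
  case (Suc N)
  then obtain \<phi> where phi: "strict_mono \<phi>" "\<forall>i\<in>{1..N}. (\<exists>v t. seq_compatible (\<lambda>k. F i (\<phi> k)) v t)
           \<and> (\<exists>v t. seq_compatible (\<lambda>k. G i (\<phi> k)) v t)" by blast
  obtain \<psi>1 v1 t1 where p1: "strict_mono \<psi>1" "seq_compatible (\<lambda>k. F (Suc N) (\<phi> (\<psi>1 k))) v1 t1"
    using ext1[of "\<lambda>k. F (Suc N) (\<phi> k)"] by blast
  obtain \<psi>2 v2 t2 where p2: "strict_mono \<psi>2" "seq_compatible (\<lambda>k. G (Suc N) (\<phi> (\<psi>1 (\<psi>2 k)))) v2 t2"
    using ext1[of "\<lambda>k. G (Suc N) (\<phi> (\<psi>1 k))"] by blast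
  define \<theta> where "\<theta> k = \<psi>1 (\<psi>2 k)" for k
  have sc: "strict_mono \<theta>" using p1(1) p2(1) by (simp add: strict_mono_def \<theta>_def)
  have sphi: "strict_mono (\<lambda>k. \<phi> (\<theta> k))" using phi(1) sc by (simp add: strict_mono_def)
  have "\<forall>i\<in>{1..Suc N}. (\<exists>v t. seq_compatible (\<lambda>k. F i (\<phi> (\<theta> k))) v t)
           \<and> (\<exists>v t. seq_compatible (\<lambda>k. G i (\<phi> (\<theta> k))) v t)"
  proof
    fix i assume i: "i \<in> {1..Suc N}"
    show "(\<exists>v t. seq_compatible (\<lambda>k. F i (\<phi> (\<theta> k))) v t)
           \<and> (\<exists>v t. seq_compatible (\<lambda>k. G i (\<phi> (\<theta> k))) v t)"
    proof (cases "i = Suc N")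
      case True
      have "seq_compatible (\<lambda>k. F i (\<phi> (\<theta> k))) v1 t1"
        using sc_mono[OF p1(2) p2(1)] True by (simp add: \<theta>_def)
      moreover have "seq_compatible (\<lambda>k. G i (\<phi> (\<theta> k))) v2 t2"
        using p2(2) True by (simp add: \<theta>_def)
      ultimately show ?thesis by blast
    next
      case False
      then have "i \<in> {1..N}" using i by auto
      then obtain v t v' t' where q: "seq_compatible (\<lambda>k. F i (\<phi> k)) v t"
          "seq_compatible (\<lambda>k. G i (\<phi> k)) v' t'" using phi(2) by blast
      show ?thesis using sc_mono[OF q(1) sc] sc_mono[OF q(2) sc] by blast
    qed
  qed
  then show ?case using sphi by blast
qed

lemma select_step:
  fixes Q :: "nat \<Rightarrow> nat \<Rightarrow> bool"
  assumes K: "\<And>k. k \<ge> K \<Longrightarrow> eventually (\<lambda>l. Q k l) sequentially"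
  shows "\<exists>l. m < l \<and> (\<forall>k\<in>{K..m}. Q k l)"
proof -
    have "eventually (\<lambda>l. m < l) sequentially" by (rule eventually_gt_at_top)
    moreover have "eventually (\<lambda>l. \<forall>k\<in>{K..m}. Q k l) sequentially"
    proof (rule eventually_ball_finite)
      show "finite {K..m}" by simp
      show "\<forall>k\<in>{K..m}. eventually (\<lambda>l. Q k l) sequentially" using K by simp
    qed
    ultimately have "eventually (\<lambda>l. m < l \<and> (\<forall>k\<in>{K..m}. Q k l)) sequentially"
      by (rule eventually_conj)
    then obtain L where "\<forall>l\<ge>L. m < l \<and> (\<forall>k\<in>{K..m}. Q k l)" unfolding eventually_sequentially by blast
    then show "\<exists>l. m < l \<and> (\<forall>k\<in>{K..m}. Q k l)" by blast
qed

lemma select: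
  assumes "eventually (\<lambda>k. eventually (\<lambda>l. Q k l) sequentially) sequentially"
  shows "\<exists>\<phi>::nat\<Rightarrow>nat. strict_mono \<phi> \<and> (\<forall>j j'. j < j' \<longrightarrow> Q (\<phi> j) (\<phi> j'))"
proof -
  obtain K where K0: "\<forall>k\<ge>K. eventually (\<lambda>l. Q k l) sequentially"
    using iffD1[OF eventually_sequentially assms] by (elim exE)
  have K: "\<And>k. k \<ge> K \<Longrightarrow> eventually (\<lambda>l. Q k l) sequentially" using K0 by blast
  have "\<forall>m. \<exists>l. m < l \<and> (\<forall>k\<in>{K..m}. Q k l)"
    using select_step[of K Q] K by blast
  then obtain g where g0: "\<forall>m. m < g m \<and> (\<forall>k\<in>{K..m}. Q k (g m))" by (rule choice[THEN exE])
  then have g: "\<And>m. m < g m" "\<And>m k. k \<in> {K..m} \<Longrightarrow> Q k (g m)" by blast+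
  define \<phi> where "\<phi> j = (g ^^ j) K" for j
  have phiS: "\<phi> (Suc j) = g (\<phi> j)" for j by (simp add: \<phi>_def)
  have sm: "strict_mono \<phi>" unfolding strict_mono_Suc_iff using g(1) phiS by simp
  have geK: "K \<le> \<phi> j" for j
  proof (induction j)
    case 0 then show ?case by (simp add: \<phi>_def)
  next
    case (Suc j) then show ?case using g(1)[of "\<phi> j"] phiS[of j] by simp
  qed
  have "Q (\<phi> j) (\<phi> j')" if "j < j'" for j j'
  proof -
    define p where "p = j' - 1"
    have p: "j' = Suc p" "j \<le> p" using that by (auto simp: p_def)
    have "\<phi> j \<le> \<phi> p" using sm p(2) by (simp add: strict_mono_less_eq)
    then have "\<phi> j \<in> {K..\<phi> p}" using geK[of j] by simp
    then have "Q (\<phi> j) (g (\<phi> p))" by (rule g(2))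
    then show ?thesis unfolding p(1) phiS[of p] .
  qed
  then have H: "\<forall>j j'. j < j' \<longrightarrow> Q (\<phi> j) (\<phi> j')" by blast
  have "strict_mono \<phi> \<and> (\<forall>j j'. j < j' \<longrightarrow> Q (\<phi> j) (\<phi> j'))" using sm H by (rule conjI)
  then show ?thesis by blast
qed



lemma adm_one:
  assumes f: "seq_compatible f \<rho> t\<rho>" and g: "seq_compatible g \<sigma> t\<sigma>"
    and ineq: "\<And>k l. k < l \<Longrightarrow> f k < g l + H"
  shows "(\<sigma> \<noteq> -\<infinity> \<and> (\<rho> = \<infinity> \<longrightarrow> \<sigma> = \<infinity>)) \<and>
     (((t\<rho> \<in> {NegOne, Zero} \<and> t\<sigma> \<in> {Zero, One}) \<or> (t\<rho> = NegOne \<and> t\<sigma> = NegOne))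
          \<longrightarrow> \<rho> < \<sigma> + ereal H) \<and>
     (((t\<rho> = Zero \<and> t\<sigma> = NegOne) \<or> t\<rho> = One) \<longrightarrow> \<rho> \<le> \<sigma> + ereal H)"
proof -
  have A: "ereal (f k) \<le> \<sigma> + ereal H" for k
  proof (rule LIMSEQ_le_const[OF sc_tendsto_H[OF g, of H]])
    have "\<forall>n\<ge>Suc k. ereal (f k) \<le> ereal (g n + H)"
    proof (intro allI impI)
      fix n assume "Suc k \<le> n"
      then have "f k < g n + H" using ineq by simp
      then show "ereal (f k) \<le> ereal (g n + H)" by simp
    qed
    then show "\<exists>N. \<forall>n\<ge>N. ereal (f k) \<le> ereal (g n + H)" by blast
  qed
  have B: "\<rho> \<le> \<sigma> + ereal H"
    by (rule LIMSEQ_le_const2[OF sc_tendsto[OF f]]) (use A in blast)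
  have s1: "\<sigma> \<noteq> -\<infinity>" using A[of 0] by auto
  have s2: "\<rho> = \<infinity> \<longrightarrow> \<sigma> = \<infinity>" using B s1 by (cases \<sigma>) auto
  have s3: "\<rho> < \<sigma> + ereal H"
    if c: "(t\<rho> \<in> {NegOne, Zero} \<and> t\<sigma> \<in> {Zero, One}) \<or> (t\<rho> = NegOne \<and> t\<sigma> = NegOne)"
  proof (cases "t\<rho> = NegOne")
    case True
    then have "\<rho> < ereal (f 0)" using sc_NegOne f by blast
    then show ?thesis using A[of 0] by (rule less_le_trans)
  next
    case False
    then have z: "t\<rho> = Zero" "t\<sigma> \<in> {Zero, One}" using c by auto
    have r: "\<rho> = ereal (f 0)" using sc_Zero f z(1) by metis
    have i1: "f 0 < g 1 + H" using ineq by simp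
    obtain b where b: "\<sigma> = ereal b" using sc_fin[OF g] z(2) by blast
    have "ereal (g 1) \<le> \<sigma>"
    proof (cases "t\<sigma> = Zero")
      case True then show ?thesis using sc_Zero g by (metis order_refl)
    next
      case False then have "t\<sigma> = One" using z(2) by simp
      then show ?thesis using sc_One g by (metis less_imp_le)
    qed
    then have "g 1 \<le> b" using b by simp
    then show ?thesis using r b i1 by simp
  qed
  show ?thesis using s1 s2 s3 B by blast
qed

lemma adm_back:
  assumes f: "seq_compatible f \<rho> t\<rho>" and g: "seq_compatible g \<sigma> t\<sigma>"
    and a1: "\<sigma> \<noteq> -\<infinity>" "\<rho> = \<infinity> \<longrightarrow> \<sigma> = \<infinity>"
    and a2: "((t\<rho> \<in> {NegOne, Zero} \<and> t\<sigma> \<in> {Zero, One}) \<or> (t\<rho> = NegOne \<and> t\<sigma> = NegOne))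
          \<longrightarrow> \<rho> < \<sigma> + ereal H"
    and a3: "((t\<rho> = Zero \<and> t\<sigma> = NegOne) \<or> t\<rho> = One) \<longrightarrow> \<rho> \<le> \<sigma> + ereal H"
  shows "eventually (\<lambda>k. eventually (\<lambda>l. f k < g l + H) sequentially) sequentially"
proof -
  define C where "C k \<longleftrightarrow> (t\<sigma> \<in> {Zero, One} \<longrightarrow> ereal (f k) < \<sigma> + ereal H) \<and>
      (t\<sigma> = NegOne \<longrightarrow> ereal (f k) \<le> \<sigma> + ereal H)" for k
  have gNO: "t\<sigma> \<noteq> NegOmega" using sc_NegOmega g a1(1) by blast
  have ev: "eventually C sequentially"
  proof (cases "\<rho> < \<sigma> + ereal H")
    case True
    have "eventually (\<lambda>k. ereal (f k) < \<sigma> + ereal H) sequentially"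
      using order_tendstoD(2)[OF sc_tendsto[OF f] True] .
    then show ?thesis by (rule eventually_mono) (auto simp: C_def)
  next
    case False
    have "C k" for k
    proof (cases "t\<sigma> = Omega")
      case True then show ?thesis by (simp add: C_def)
    next
      case tsO: False
      then have tsf: "t\<sigma> \<in> {Zero, One, NegOne}" using gNO by (cases t\<sigma>) auto
      then obtain b where b: "\<sigma> = ereal b" using sc_fin[OF g] by blast
      show ?thesis
      proof (cases t\<rho>)
        case NegOmega
        then have "\<rho> = -\<infinity>" using sc_NegOmega f by blast
        then show ?thesis using False b by simp
      next
        case NegOne
        then show ?thesis using False a2 tsf by auto
      next
        case Zero
        then have "ereal (f k) = \<rho>" using sc_Zero f by blast
        moreover have "t\<sigma> \<noteq> Zero \<and> t\<sigma> \<noteq> One" using False a2 Zero by auto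
        ultimately show ?thesis using a3 Zero by (auto simp: C_def)
      next
        case One
        then have "ereal (f k) < \<rho>" using sc_One f by blast
        moreover have "\<rho> \<le> \<sigma> + ereal H" using a3 One by simp
        ultimately have "ereal (f k) < \<sigma> + ereal H" by (rule less_le_trans)
        then show ?thesis by (auto simp: C_def)
      next
        case Omega
        then have "\<rho> = \<infinity>" using sc_Omega f by blast
        then show ?thesis using a1(2) b by simp
      qed
    qed
    then show ?thesis by (simp add: always_eventually)
  qed
  have step: "eventually (\<lambda>l. f k < g l + H) sequentially" if Ck: "C k" for k
  proof (cases t\<sigma>)
    case NegOmega then show ?thesis using gNO by simp
  next
    case Zero
    then have gz: "\<And>l. ereal (g l) = \<sigma>" using sc_Zero g by blast
    have "ereal (f k) < \<sigma> + ereal H" using Ck Zero by (simp add: C_def)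
    then have "f k < g l + H" for l using gz[of l] by (metis plus_ereal.simps(1) less_ereal.simps(1))
    then show ?thesis by (simp add: always_eventually)
  next
    case One
    then obtain b where b: "\<sigma> = ereal b" "g \<longlonglongrightarrow> b" using g by (auto simp: seq_compatible_def)
    have "ereal (f k) < \<sigma> + ereal H" using Ck One by (simp add: C_def)
    then have "f k - H < b" using b by simp
    from order_tendstoD(1)[OF b(2) this] show ?thesis
      by (rule eventually_mono) simp
  next
    case NegOne
    then obtain b where b: "\<sigma> = ereal b" using g by (auto simp: seq_compatible_def)
    have "ereal (f k) \<le> \<sigma> + ereal H" using Ck NegOne by (simp add: C_def)
    then have 1: "f k \<le> b + H" using b by simp
    have "b < g l" for l using sc_NegOne[OF g[unfolded NegOne]] b by simp
    then have "f k < g l + H" for l using 1 by (metis add_strict_right_mono le_less_trans)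
    then show ?thesis by (simp add: always_eventually)
  next
    case Omega
    then have "filterlim g at_top sequentially" using g by (simp add: seq_compatible_def)
    then have "eventually (\<lambda>l. f k - H < g l) sequentially" by (simp add: filterlim_at_top_dense)
    then show ?thesis by (rule eventually_mono) simp
  qed
  show ?thesis using ev by (rule eventually_mono) (rule step)
qed


theorem mainTheorem11:
  fixes n m :: nat
    and r s u v :: "nat \<Rightarrow> real^'d"
    and t w :: "nat \<Rightarrow> real^'e"
    and h d :: "nat \<Rightarrow> real"
    and c :: "real^'e"
  assumes "\<forall>i\<in>{1..n}. (\<forall>k. r i $ k \<in> \<rat> \<and> s i $ k \<in> \<rat>) \<and> (\<forall>k. t i $ k \<in> \<rat>) \<and> h i \<in> \<rat>"
    and "\<forall>j\<in>{1..m}. (\<forall>k. u j $ k \<in> \<rat> \<and> v j $ k \<in> \<rat>) \<and> (\<forall>k. w j $ k \<in> \<rat>) \<and> d j \<in> \<rat>"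
  shows "ramsey_exists (\<lambda>x y. phi n r s t h m u v w d x y c) \<longleftrightarrow>
    (\<exists>\<rho> \<sigma> t\<rho> t\<sigma>. admissible n t h c \<rho> \<sigma> t\<rho> t\<sigma> \<and>
       (\<exists>a. compatible n r s \<rho> \<sigma> t\<rho> t\<sigma> a \<and> eq_constraints m u v w d c a))"
proof
  assume "ramsey_exists (\<lambda>x y. phi n r s t h m u v w d x y c)"
  then have "\<exists>a::nat\<Rightarrow>real^'d. inj a \<and> (\<forall>i j. i < j \<longrightarrow> phi n r s t h m u v w d (a i) (a j) c)"
    by (simp add: ramsey_exists_def)
  then obtain a :: "nat \<Rightarrow> real^'d" where a: "inj a \<and> (\<forall>i j. i < j \<longrightarrow> phi n r s t h m u v w d (a i) (a j) c)"
    by (elim exE)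
  have inj: "inj a" using a by (rule conjunct1)
  have P: "\<And>i j. i < j \<Longrightarrow> phi n r s t h m u v w d (a i) (a j) c"
    by (rule conjunct2[OF a, rule_format])
  obtain \<phi> where s\<phi>: "strict_mono \<phi>" and c\<phi>: "\<forall>i\<in>{1..n}.
      (\<exists>v t. seq_compatible (\<lambda>k. r i \<bullet> a (\<phi> k)) v t) \<and> (\<exists>v t. seq_compatible (\<lambda>k. s i \<bullet> a (\<phi> k)) v t)"
    using ext_all[of n "\<lambda>i k. r i \<bullet> a k" "\<lambda>i k. s i \<bullet> a k"] by auto
  have "\<forall>i\<in>{1..n}. \<exists>x. seq_compatible (\<lambda>k. r i \<bullet> a (\<phi> k)) (fst x) (snd x)"
  proof
    fix i assume "i \<in> {1..n}"
    then obtain v' t' where "seq_compatible (\<lambda>k. r i \<bullet> a (\<phi> k)) v' t'" using c\<phi> by blast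
    then show "\<exists>x. seq_compatible (\<lambda>k. r i \<bullet> a (\<phi> k)) (fst x) (snd x)" by (intro exI[of _ "(v', t')"]) simp
  qed
  then obtain FR where FR: "\<forall>i\<in>{1..n}. seq_compatible (\<lambda>k. r i \<bullet> a (\<phi> k)) (fst (FR i)) (snd (FR i))"
    by (rule bchoice[THEN exE])
  have "\<forall>i\<in>{1..n}. \<exists>x. seq_compatible (\<lambda>k. s i \<bullet> a (\<phi> k)) (fst x) (snd x)"
  proof
    fix i assume "i \<in> {1..n}"
    then obtain v' t' where "seq_compatible (\<lambda>k. s i \<bullet> a (\<phi> k)) v' t'" using c\<phi> by blast
    then show "\<exists>x. seq_compatible (\<lambda>k. s i \<bullet> a (\<phi> k)) (fst x) (snd x)" by (intro exI[of _ "(v', t')"]) simp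
  qed
  then obtain FS where FS: "\<forall>i\<in>{1..n}. seq_compatible (\<lambda>k. s i \<bullet> a (\<phi> k)) (fst (FS i)) (snd (FS i))"
    by (rule bchoice[THEN exE])
  define \<rho> where "\<rho> i = fst (FR i)" for i
  define t\<rho> where "t\<rho> i = snd (FR i)" for i
  define \<sigma> where "\<sigma> i = fst (FS i)" for i
  define t\<sigma> where "t\<sigma> i = snd (FS i)" for i
  define b where "b k = a (\<phi> k)" for k
  have injb: "inj b" unfolding inj_def b_def using inj s\<phi> by (auto dest: injD simp: strict_mono_eq)
  have comp: "compatible n r s \<rho> \<sigma> t\<rho> t\<sigma> b"
    unfolding compatible_def using injb FR FS by (simp add: \<rho>_def t\<rho>_def \<sigma>_def t\<sigma>_def b_def)
  have eqc: "eq_constraints m u v w d c b"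
    unfolding eq_constraints_def
  proof (intro ballI allI impI)
    fix j k l :: nat assume j: "j \<in> {1..m}" and kl: "k < l"
    then have "\<phi> k < \<phi> l" using s\<phi> by (simp add: strict_mono_less)
    then have "phi n r s t h m u v w d (a (\<phi> k)) (a (\<phi> l)) c" by (rule P)
    then show "u j \<bullet> b k = v j \<bullet> b l + w j \<bullet> c + d j" using j by (simp add: phi_def b_def)
  qed
  have adm: "admissible n t h c \<rho> \<sigma> t\<rho> t\<sigma>"
    unfolding admissible_def
  proof
    fix i assume i: "i \<in> {1..n}"
    have ineq: "r i \<bullet> b k < s i \<bullet> b l + (t i \<bullet> c + h i)" if "k < l" for k l
    proof -
      have "\<phi> k < \<phi> l" using s\<phi> that by (simp add: strict_mono_less)
      then have "phi n r s t h m u v w d (a (\<phi> k)) (a (\<phi> l)) c" by (rule P)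
      then show ?thesis using i by (simp add: phi_def b_def add.assoc)
    qed
    have f: "seq_compatible (\<lambda>k. r i \<bullet> b k) (\<rho> i) (t\<rho> i)" using FR i by (simp add: \<rho>_def t\<rho>_def b_def)
    have g: "seq_compatible (\<lambda>k. s i \<bullet> b k) (\<sigma> i) (t\<sigma> i)" using FS i by (simp add: \<sigma>_def t\<sigma>_def b_def)
    show "(\<sigma> i \<noteq> -\<infinity> \<and> (\<rho> i = \<infinity> \<longrightarrow> \<sigma> i = \<infinity>)) \<and>
       (((t\<rho> i \<in> {NegOne, Zero} \<and> t\<sigma> i \<in> {Zero, One}) \<or> (t\<rho> i = NegOne \<and> t\<sigma> i = NegOne))
          \<longrightarrow> \<rho> i < \<sigma> i + ereal (t i \<bullet> c + h i)) \<and>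
       (((t\<rho> i = Zero \<and> t\<sigma> i = NegOne) \<or> t\<rho> i = One)
          \<longrightarrow> \<rho> i \<le> \<sigma> i + ereal (t i \<bullet> c + h i))"
      by (rule adm_one[OF f g ineq])
  qed
  show "\<exists>\<rho> \<sigma> t\<rho> t\<sigma>. admissible n t h c \<rho> \<sigma> t\<rho> t\<sigma> \<and>
       (\<exists>a. compatible n r s \<rho> \<sigma> t\<rho> t\<sigma> a \<and> eq_constraints m u v w d c a)"
    by (intro exI[of _ \<rho>] exI[of _ \<sigma>] exI[of _ t\<rho>] exI[of _ t\<sigma>] conjI adm exI[of _ b] comp eqc)
next
  assume "\<exists>\<rho> \<sigma> t\<rho> t\<sigma>. admissible n t h c \<rho> \<sigma> t\<rho> t\<sigma> \<and>
       (\<exists>a. compatible n r s \<rho> \<sigma> t\<rho> t\<sigma> a \<and> eq_constraints m u v w d c a)"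
  then obtain \<rho> \<sigma> t\<rho> t\<sigma> a where adm: "admissible n t h c \<rho> \<sigma> t\<rho> t\<sigma>"
    and comp: "compatible n r s \<rho> \<sigma> t\<rho> t\<sigma> a" and eqc: "eq_constraints m u v w d c a"
    by blast
  have inj: "inj a" using comp by (simp add: compatible_def)
  have Ei: "eventually (\<lambda>k. eventually (\<lambda>l. r i \<bullet> a k < s i \<bullet> a l + (t i \<bullet> c + h i)) sequentially) sequentially"
    if i: "i \<in> {1..n}" for i
  proof -
    have f: "seq_compatible (\<lambda>k. r i \<bullet> a k) (\<rho> i) (t\<rho> i)"
      and g: "seq_compatible (\<lambda>k. s i \<bullet> a k) (\<sigma> i) (t\<sigma> i)"
      using comp i by (simp_all add: compatible_def)
    have A: "(\<sigma> i \<noteq> -\<infinity> \<and> (\<rho> i = \<infinity> \<longrightarrow> \<sigma> i = \<infinity>)) \<and>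
       (((t\<rho> i \<in> {NegOne, Zero} \<and> t\<sigma> i \<in> {Zero, One}) \<or> (t\<rho> i = NegOne \<and> t\<sigma> i = NegOne))
          \<longrightarrow> \<rho> i < \<sigma> i + ereal (t i \<bullet> c + h i)) \<and>
       (((t\<rho> i = Zero \<and> t\<sigma> i = NegOne) \<or> t\<rho> i = One)
          \<longrightarrow> \<rho> i \<le> \<sigma> i + ereal (t i \<bullet> c + h i))"
      using adm i unfolding admissible_def by blast
    show ?thesis using adm_back[OF f g, of "t i \<bullet> c + h i"] A by blast
  qed
  have E1: "eventually (\<lambda>k. \<forall>i\<in>{1..n}. eventually (\<lambda>l. r i \<bullet> a k < s i \<bullet> a l + (t i \<bullet> c + h i)) sequentially) sequentially"
    by (rule eventually_ball_finite) (use Ei in simp_all)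
  have E: "eventually (\<lambda>k. eventually (\<lambda>l. \<forall>i\<in>{1..n}. r i \<bullet> a k < s i \<bullet> a l + (t i \<bullet> c + h i)) sequentially) sequentially"
    using E1 by (rule eventually_mono) (rule eventually_ball_finite, simp_all)
  obtain \<phi> :: "nat \<Rightarrow> nat" where s\<phi>: "strict_mono \<phi>"
    and Q: "\<forall>j j'. j < j' \<longrightarrow> (\<forall>i\<in>{1..n}. r i \<bullet> a (\<phi> j) < s i \<bullet> a (\<phi> j') + (t i \<bullet> c + h i))"
    using select[OF E] by blast
  have injb: "inj (\<lambda>k. a (\<phi> k))" unfolding inj_def using inj s\<phi> by (auto dest: injD simp: strict_mono_eq)
  have "phi n r s t h m u v w d (a (\<phi> j)) (a (\<phi> j')) c" if jj: "j < j'" for j j'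
  proof -
    have "\<phi> j < \<phi> j'" using s\<phi> jj by (simp add: strict_mono_less)
    then have e: "\<forall>q\<in>{1..m}. u q \<bullet> a (\<phi> j) = v q \<bullet> a (\<phi> j') + w q \<bullet> c + d q"
      using eqc by (simp add: eq_constraints_def)
    have "\<forall>i\<in>{1..n}. r i \<bullet> a (\<phi> j) < s i \<bullet> a (\<phi> j') + (t i \<bullet> c + h i)" using Q jj by blast
    then show ?thesis using e by (simp add: phi_def add.assoc)
  qed
  then have "\<forall>j j'. j < j' \<longrightarrow> phi n r s t h m u v w d (a (\<phi> j)) (a (\<phi> j')) c" by blast
  then have "inj (\<lambda>k. a (\<phi> k)) \<and> (\<forall>j j'. j < j' \<longrightarrow> phi n r s t h m u v w d (a (\<phi> j)) (a (\<phi> j')) c)"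
    using injb by (rule conjI[rotated])
  then have "\<exists>b::nat\<Rightarrow>real^'d. inj b \<and> (\<forall>j j'. j < j' \<longrightarrow> phi n r s t h m u v w d (b j) (b j') c)"
    by (rule exI[where x="\<lambda>k. a (\<phi> k)"])
  then show "ramsey_exists (\<lambda>x y. phi n r s t h m u v w d x y c)"
    by (simp add: ramsey_exists_def)
qed


end
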